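(* Let $d\ge1$, $D=\{1,\dots,d\}$, let $\Pi=(\Pi_{ij})$ and $Q$ be $d\times d$ stochastic matrices indexed by $D$, let $\pi=(\pi_j)_{j\in D}$ be a probability vector, and let $\varphi^{(O)}_H$ be the quantum Markov chain on $\mathcal{A}_H=\bigotimes_{\mathbb{N}}\mathcal{M}_d$ with initial state $\varphi_{H,0}(\cdot)=\operatorname{Tr}(W_0\,\cdot)$, $W_0=\sum_{j\in D}\pi_je_{jj}$, and transition expectation $\mathcal{E}^{(O)}_H(a\otimes b)=a\diamond P_{H,O}(\mathbf{1}_d)\diamond P_H(b)$. Then for all $n\in\mathbb{N}$ and $j_0,\dots,j_n\in D$, $$\varphi^{(O)}_H\Big(\prod_{m=0}^nj_{H_m}(e_{j_mj_m})\Big)=\pi_{j_0}\prod_{m=0}^{n-1}\Pi_{j_mj_{m+1}}.$$ That is, the restriction of $\varphi^{(O)}_H$ to the diagonal algebra $\bigotimes_{\mathbb{N}}\mathcal{D}_e$ is the classical Markov chain with initial distribution $\pi$ and transition matrix $\Pi$.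
   Context: $\mathcal{M}_d$: complex $d\times d$ matrices with identity $\mathbf{1}_d$ and matrix units $e_{ij}$; $\mathcal{D}_e=\{\sum_hx_he_{hh}\}$ is its diagonal subalgebra. $\diamond$ is the Schur (entrywise) product; stochastic matrices have nonnegative entries and row sums $1$. $P_H(A)=\sum_{i,j,k,l\in D}\sqrt{\Pi_{ik}\Pi_{jl}}\,a_{kl}e_{ij}$, $P_{H,O}(B)=\sum_{i,j,k,l\in D}\sqrt{Q_{ik}Q_{jl}}\,b_{kl}e_{ij}$. $j_{H_m}(a)$ denotes $a$ at site $m$ of $\mathcal{A}_H$ with identities elsewhere, and $\varphi^{(O)}_H(j_{H_0}(a_0)\cdots j_{H_n}(a_n))=\varphi_{H,0}(\mathcal{E}^{(O)}_H(a_0\otimes\mathcal{E}^{(O)}_H(a_1\otimes\cdots\mathcal{E}^{(O)}_H(a_n\otimes\mathbf{1}_d)\cdots)))$. *)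

theory Defs
  imports Complex_Main
begin

text \<open>d x d complex matrices indexed by D = {1..d}, represented as functions
  nat => nat => complex; only entries with indices in D are meaningful.\<close>
type_synonym cmat = "nat \<Rightarrow> nat \<Rightarrow> complex"

definition idx :: "nat \<Rightarrow> nat set" where
  "idx d = {1..d}"

definition stochastic :: "nat \<Rightarrow> (nat \<Rightarrow> nat \<Rightarrow> real) \<Rightarrow> bool" where
  "stochastic d P \<longleftrightarrow> (\<forall>i\<in>idx d. \<forall>j\<in>idx d. 0 \<le> P i j) \<and>
                       (\<forall>i\<in>idx d. (\<Sum>j\<in>idx d. P i j) = 1)"

definition prob_vector :: "nat \<Rightarrow> (nat \<Rightarrow> real) \<Rightarrow> bool" where
  "prob_vector d p \<longleftrightarrow> (\<forall>j\<in>idx d. 0 \<le> p j) \<and> (\<Sum>j\<in>idx d. p j) = 1"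

definition munit :: "nat \<Rightarrow> nat \<Rightarrow> cmat" where
  "munit i j = (\<lambda>k l. if k = i \<and> l = j then 1 else 0)"

definition mone :: cmat where
  "mone = (\<lambda>k l. if k = l then 1 else 0)"

definition schur :: "cmat \<Rightarrow> cmat \<Rightarrow> cmat" where
  "schur A B = (\<lambda>i j. A i j * B i j)"

definition mmult :: "nat \<Rightarrow> cmat \<Rightarrow> cmat \<Rightarrow> cmat" where
  "mmult d A B = (\<lambda>i j. \<Sum>k\<in>idx d. A i k * B k j)"

definition mtrace :: "nat \<Rightarrow> cmat \<Rightarrow> complex" where
  "mtrace d A = (\<Sum>i\<in>idx d. A i i)"

text \<open>P(A) = sum_{i,j,k,l} sqrt(S_ik S_jl) a_kl e_ij, used both for P_H (S = Pi)
  and P_{H,O} (S = Q).\<close>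
definition Pmap :: "nat \<Rightarrow> (nat \<Rightarrow> nat \<Rightarrow> real) \<Rightarrow> cmat \<Rightarrow> cmat" where
  "Pmap d S A = (\<lambda>i j. \<Sum>k\<in>idx d. \<Sum>l\<in>idx d.
        complex_of_real (sqrt (S i k * S j l)) * A k l)"

definition transE :: "nat \<Rightarrow> (nat \<Rightarrow> nat \<Rightarrow> real) \<Rightarrow> (nat \<Rightarrow> nat \<Rightarrow> real)
                      \<Rightarrow> cmat \<Rightarrow> cmat \<Rightarrow> cmat" where
  "transE d Pi Q a b = schur (schur a (Pmap d Q mone)) (Pmap d Pi b)"

definition W0 :: "(nat \<Rightarrow> real) \<Rightarrow> cmat" where
  "W0 p = (\<lambda>i j. if i = j then complex_of_real (p i) else 0)"

text \<open>Value of the quantum Markov chain phi_H^(O) on the localized product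
  j_{H_0}(a_0) ... j_{H_n}(a_n), where the list is [a_0, ..., a_n]:
  phi_{H,0}(E(a_0 \<otimes> E(a_1 \<otimes> ... E(a_n \<otimes> 1)...))).\<close>
definition qmc_phi :: "nat \<Rightarrow> (nat \<Rightarrow> nat \<Rightarrow> real) \<Rightarrow> (nat \<Rightarrow> nat \<Rightarrow> real)
                       \<Rightarrow> (nat \<Rightarrow> real) \<Rightarrow> cmat list \<Rightarrow> complex" where
  "qmc_phi d Pi Q p as =
     mtrace d (mmult d (W0 p) (foldr (transE d Pi Q) as mone))"

end

theory Submission
  imports Defs
begin

fun mchain :: "(nat \<Rightarrow> nat \<Rightarrow> real) \<Rightarrow> nat \<Rightarrow> nat list \<Rightarrow> real" where
  "mchain P j [] = 1"
| "mchain P j (k # ks) = P j k * mchain P k ks"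

lemma Pmap_one:
  assumes "stochastic d S" "i \<in> idx d"
  shows "Pmap d S mone i i = 1"
proof -
  have nn: "\<And>k. k \<in> idx d \<Longrightarrow> 0 \<le> S i k" using assms unfolding stochastic_def by blast
  have "Pmap d S mone i i = (\<Sum>k\<in>idx d. \<Sum>l\<in>idx d.
        complex_of_real (sqrt (S i k * S i l)) * (if k = l then 1 else 0))"
    by (simp add: Pmap_def mone_def)
  also have "\<dots> = (\<Sum>k\<in>idx d. complex_of_real (S i k))"
  proof (rule sum.cong[OF refl])
    fix k assume k: "k \<in> idx d"
    have fin: "finite (idx d)" by (simp add: idx_def)
    have "(\<Sum>l\<in>idx d. complex_of_real (sqrt (S i k * S i l)) * (if k = l then 1 else 0))
       = complex_of_real (sqrt (S i k * S i k))"
      using k fin by (simp add: if_distrib[of "\<lambda>x. _ * x"] sum.delta cong: if_cong)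
    also have "\<dots> = complex_of_real (S i k)" using nn[OF k] by (simp add: real_sqrt_mult_self)
    finally show "(\<Sum>l\<in>idx d. complex_of_real (sqrt (S i k * S i l)) * (if k = l then 1 else 0))
       = complex_of_real (S i k)" .
  qed
  also have "\<dots> = complex_of_real (\<Sum>k\<in>idx d. S i k)" by simp
  also have "\<dots> = 1" using assms unfolding stochastic_def by simp
  finally show ?thesis .
qed

lemma Pmap_diag:
  assumes "stochastic d S" "i \<in> idx d" "k \<in> idx d"
  shows "Pmap d S (\<lambda>a b. if a = k \<and> b = k then c else 0) i i = complex_of_real (S i k) * c"
proof -
  have nn: "0 \<le> S i k" using assms unfolding stochastic_def by blast
  have fin: "finite (idx d)" by (simp add: idx_def)
  have "Pmap d S (\<lambda>a b. if a = k \<and> b = k then c else 0) i i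
     = (\<Sum>a\<in>idx d. \<Sum>b\<in>idx d. if a = k \<and> b = k then complex_of_real (sqrt (S i a * S i b)) * c else 0)"
    unfolding Pmap_def by (intro sum.cong refl) auto
  also have "\<dots> = (\<Sum>a\<in>idx d. if a = k then complex_of_real (sqrt (S i a * S i k)) * c else 0)"
    using fin assms(3) by (intro sum.cong refl) (auto simp: sum.delta)
  also have "\<dots> = complex_of_real (sqrt (S i k * S i k)) * c"
    using fin assms(3) by (simp add: sum.delta)
  also have "\<dots> = complex_of_real (S i k) * c" using nn by (simp add: real_sqrt_mult_self)
  finally show ?thesis .
qed

lemma transE_unit:
  "transE d Pi Q (munit j j) b = (\<lambda>a c. if a = j \<and> c = j then Pmap d Q mone j j * Pmap d Pi b j j else 0)"
  unfolding transE_def schur_def munit_def by (auto intro!: ext)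

lemma fold_main:
  assumes "stochastic d Pi" "stochastic d Q" "j \<in> idx d" "set ks \<subseteq> idx d"
  shows "foldr (transE d Pi Q) (map (\<lambda>j. munit j j) (j # ks)) mone
       = (\<lambda>a b. if a = j \<and> b = j then complex_of_real (mchain Pi j ks) else 0)"
  using assms(3,4)
proof (induction ks arbitrary: j)
  case Nil
  have 1: "Pmap d Q mone j j = 1" "Pmap d Pi mone j j = 1"
    using Pmap_one[OF assms(2) Nil(1)] Pmap_one[OF assms(1) Nil(1)] by auto
  show ?case unfolding list.map foldr.simps o_def id_def transE_unit 1 by (rule ext)+ simp
next
  case (Cons k ks)
  have IH: "foldr (transE d Pi Q) (map (\<lambda>j. munit j j) (k # ks)) mone
       = (\<lambda>a b. if a = k \<and> b = k then complex_of_real (mchain Pi k ks) else 0)"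
    using Cons by simp
  have "foldr (transE d Pi Q) (map (\<lambda>j. munit j j) (j # k # ks)) mone
     = transE d Pi Q (munit j j) (foldr (transE d Pi Q) (map (\<lambda>j. munit j j) (k # ks)) mone)"
    by simp
  also have "\<dots> = (\<lambda>a b. if a = j \<and> b = j then complex_of_real (mchain Pi j (k # ks)) else 0)"
  proof -
    have j: "j \<in> idx d" and k: "k \<in> idx d" using Cons.prems by auto
    have 1: "Pmap d Q mone j j = 1" using Pmap_one[OF assms(2) j] .
    have 2: "Pmap d Pi (\<lambda>a b. if a = k \<and> b = k then complex_of_real (mchain Pi k ks) else 0) j j
        = complex_of_real (Pi j k) * complex_of_real (mchain Pi k ks)"
      using Pmap_diag[OF assms(1) j k] .
    show ?thesis unfolding IH transE_unit 1 2 by (rule ext)+ simp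
  qed
  finally show ?case .
qed

lemma chain_prod:
  "mchain P (js a) (map js [Suc a..<Suc (a + n)]) = (\<Prod>m\<in>{a..<a+n}. P (js m) (js (Suc m)))"
proof (induction n arbitrary: a)
  case 0
  then show ?case by simp
next
  case (Suc n)
  have "[Suc a..<Suc (a + Suc n)] = Suc a # [Suc (Suc a)..<Suc (Suc a + n)]"
    by (simp add: upt_conv_Cons)
  then have "mchain P (js a) (map js [Suc a..<Suc (a + Suc n)])
     = P (js a) (js (Suc a)) * (\<Prod>m\<in>{Suc a..<Suc a+n}. P (js m) (js (Suc m)))"
    using Suc[of "Suc a"] by simp
  also have "\<dots> = (\<Prod>m\<in>{a..<a+Suc n}. P (js m) (js (Suc m)))"
    by (simp add: prod.atLeast_Suc_lessThan)
  finally show ?case .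
qed

theorem mainTheorem9:
  fixes d :: nat and Pi Q :: "nat \<Rightarrow> nat \<Rightarrow> real" and p :: "nat \<Rightarrow> real"
    and n :: nat and js :: "nat \<Rightarrow> nat"
  assumes "d \<ge> 1"
    and "stochastic d Pi" and "stochastic d Q" and "prob_vector d p"
    and "\<forall>m\<le>n. js m \<in> idx d"
  shows "qmc_phi d Pi Q p (map (\<lambda>m. munit (js m) (js m)) [0..<Suc n])
         = complex_of_real (p (js 0) * (\<Prod>m<n. Pi (js m) (js (Suc m))))"
proof -
  have l: "map (\<lambda>m. munit (js m) (js m)) [0..<Suc n]
      = map (\<lambda>j. munit j j) (js 0 # map js [Suc 0..<Suc (0 + n)])"
    by (simp add: upt_conv_Cons map_Suc_upt[symmetric] del: upt_Suc)
  have sub: "set (map js [Suc 0..<Suc (0 + n)]) \<subseteq> idx d" using assms(5) by auto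
  have j0: "js 0 \<in> idx d" using assms(5) by auto
  define c where "c = mchain Pi (js 0) (map js [Suc 0..<Suc (0 + n)])"
  have c: "c = (\<Prod>m<n. Pi (js m) (js (Suc m)))"
    unfolding c_def chain_prod by (simp add: lessThan_atLeast0)
  have F: "foldr (transE d Pi Q) (map (\<lambda>m. munit (js m) (js m)) [0..<Suc n]) mone
      = (\<lambda>a b. if a = js 0 \<and> b = js 0 then complex_of_real c else 0)"
    unfolding l c_def by (rule fold_main[OF assms(2,3) j0 sub])
  have fin: "finite (idx d)" by (simp add: idx_def)
  have "qmc_phi d Pi Q p (map (\<lambda>m. munit (js m) (js m)) [0..<Suc n])
      = (\<Sum>i\<in>idx d. \<Sum>k\<in>idx d. (if i = k then complex_of_real (p i) else 0) *
            (if k = js 0 \<and> i = js 0 then complex_of_real c else 0))"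
    unfolding qmc_phi_def F mtrace_def mmult_def W0_def by simp
  also have "\<dots> = (\<Sum>i\<in>idx d. if i = js 0 then complex_of_real (p i) * complex_of_real c else 0)"
  proof (intro sum.cong refl)
    fix i assume "i \<in> idx d"
    have "(\<Sum>k\<in>idx d. (if i = k then complex_of_real (p i) else 0) *
            (if k = js 0 \<and> i = js 0 then complex_of_real c else 0))
       = (\<Sum>k\<in>idx d. if k = i then (if i = js 0 then complex_of_real (p i) * complex_of_real c else 0) else 0)"
      by (intro sum.cong refl) auto
    also have "\<dots> = (if i = js 0 then complex_of_real (p i) * complex_of_real c else 0)"
      using fin \<open>i \<in> idx d\<close> by (simp add: sum.delta)
    finally show "(\<Sum>k\<in>idx d. (if i = k then complex_of_real (p i) else 0) *
            (if k = js 0 \<and> i = js 0 then complex_of_real c else 0))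
       = (if i = js 0 then complex_of_real (p i) * complex_of_real c else 0)" .
  qed
  also have "\<dots> = complex_of_real (p (js 0) * c)" using fin j0 by (simp add: sum.delta)
  finally show ?thesis using c by simp
qed

end
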